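(* Let $A$ be an infinite set, $I$ a set, and $F$ a filter on the partition lattice $\Pi(I)$. Let $\theta$ be a congruence on the algebra $\Omega(A)^{F}$. Define $Z\subseteq\{\emptyset\}\cup\bigcup F$ by: $R\in Z$ if and only if for all $f,g\in\Omega(A)^{F}$ with $f|_{R}=g|_{R}$ we have $(f,g)\in\theta$. Then $Z$ is a filter on the Boolean algebra $\{\emptyset\}\cup\bigcup F$, and for all $f,g\in\Omega(A)^{F}$ we have $(f,g)\in\theta$ if and only if $\{i\in I: f(i)=g(i)\}\in Z$.
   Context: For each $a\in A$ let $\hat{a}$ be a constant symbol, and for each $n\geq1$ and each $f:A^{n}\to A$ let $\hat{f}$ be an $n$-ary operation symbol. $\Omega(A)$ is the algebra with universe $A$ in which $\hat{a}$ is interpreted as $a$ and $\hat{f}$ as $f$. $\Pi(I)$ is the lattice of partitions of $I$ (with nonempty blocks), where $P\preceq Q$ means $P$ refines $Q$ and $P\wedge Q$ is the common refinement; a filter $F$ on $\Pi(I)$ is a nonempty set closed under $\wedge$ and upward closed under coarsening. For $f:I\to X$, $\Pi(f)=\{f^{-1}(\{x\}):x\in X\}\setminus\{\emptyset\}$. $\Omega(A)^{F}$ denotes the subalgebra $\{f\in A^{I}:\Pi(f)\in F\}$ of $\Omega(A)^{I}$. $\bigcup F$ denotes the set of all blocks of all partitions in $F$; the set $\{\emptyset\}\cup\bigcup F$ is a Boolean algebra of subsets of $I$ under the set operations. *)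

theory Defs
  imports "HOL-Library.Disjoint_Sets" "HOL-Library.FuncSet"
begin

definition refines :: "'i set set \<Rightarrow> 'i set set \<Rightarrow> bool" where
  "refines P Q \<longleftrightarrow> (\<forall>p\<in>P. \<exists>q\<in>Q. p \<subseteq> q)"

definition part_meet :: "'i set set \<Rightarrow> 'i set set \<Rightarrow> 'i set set" where
  "part_meet P Q = {p \<inter> q | p q. p \<in> P \<and> q \<in> Q \<and> p \<inter> q \<noteq> {}}"

definition partition_filter :: "'i set \<Rightarrow> 'i set set set \<Rightarrow> bool" where
  "partition_filter I F \<longleftrightarrow>
     F \<noteq> {} \<and> (\<forall>P\<in>F. partition_on I P) \<and>
     (\<forall>P\<in>F. \<forall>Q\<in>F. part_meet P Q \<in> F) \<and>
     (\<forall>P\<in>F. \<forall>Q. partition_on I Q \<and> refines P Q \<longrightarrow> Q \<in> F)"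

definition fun_partition :: "'i set \<Rightarrow> ('i \<Rightarrow> 'a) \<Rightarrow> 'i set set" where
  "fun_partition I f = {{i \<in> I. f i = x} | x. True} - {{}}"

definition filtered_power :: "'a set \<Rightarrow> 'i set \<Rightarrow> 'i set set set \<Rightarrow> ('i \<Rightarrow> 'a) set" where
  "filtered_power A I F = {f \<in> I \<rightarrow>\<^sub>E A. fun_partition I f \<in> F}"

text \<open>An n-ary operation on A is represented as a function on lists of length n.
  Pointwise application in A^I.\<close>
definition pointwise :: "'i set \<Rightarrow> ('a list \<Rightarrow> 'a) \<Rightarrow> ('i \<Rightarrow> 'a) list \<Rightarrow> ('i \<Rightarrow> 'a)" where
  "pointwise I h fs = (\<lambda>i. if i \<in> I then h (map (\<lambda>f. f i) fs) else undefined)"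

text \<open>Congruence of Omega(A)^F: equivalence on the universe, compatible with every
  operation f : A^n -> A (n >= 1); constants impose no compatibility condition.\<close>
definition omega_congruence ::
  "'a set \<Rightarrow> 'i set \<Rightarrow> 'i set set set \<Rightarrow> (('i \<Rightarrow> 'a) \<times> ('i \<Rightarrow> 'a)) set \<Rightarrow> bool" where
  "omega_congruence A I F \<theta> \<longleftrightarrow>
     equiv (filtered_power A I F) \<theta> \<and>
     (\<forall>n::nat. \<forall>h. n \<ge> 1 \<and> (\<forall>xs. length xs = n \<and> set xs \<subseteq> A \<longrightarrow> h xs \<in> A) \<longrightarrow>
        (\<forall>fs gs. length fs = n \<and> length gs = n \<and> (\<forall>k<n. (fs ! k, gs ! k) \<in> \<theta>) \<longrightarrow>
            (pointwise I h fs, pointwise I h gs) \<in> \<theta>))"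

text \<open>A (not necessarily proper) filter of a Boolean algebra B of subsets.\<close>
definition set_filter_on :: "'i set set \<Rightarrow> 'i set set \<Rightarrow> bool" where
  "set_filter_on B Z \<longleftrightarrow> Z \<noteq> {} \<and> Z \<subseteq> B \<and>
     (\<forall>R\<in>Z. \<forall>S\<in>Z. R \<inter> S \<in> Z) \<and>
     (\<forall>R\<in>Z. \<forall>S\<in>B. R \<subseteq> S \<longrightarrow> S \<in> Z)"

end

theory Submission
  imports Defs
begin

lemma pf_part: "partition_filter I F \<Longrightarrow> P \<in> F \<Longrightarrow> partition_on I P"
  unfolding partition_filter_def by blast

lemma pf_sub: "partition_filter I F \<Longrightarrow> P \<in> F \<Longrightarrow> p \<in> P \<Longrightarrow> p \<subseteq> I"
  using pf_part partition_onD1 by blast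

lemma pf_meet: "partition_filter I F \<Longrightarrow> P \<in> F \<Longrightarrow> Q \<in> F \<Longrightarrow> part_meet P Q \<in> F"
  unfolding partition_filter_def by blast

lemma pf_ne: "partition_filter I F \<Longrightarrow> \<exists>P. P \<in> F"
  unfolding partition_filter_def by blast

definition cob :: "'i set set \<Rightarrow> ('i \<Rightarrow> 'b) \<Rightarrow> bool" where
  "cob P h \<longleftrightarrow> (\<forall>p\<in>P. \<forall>i\<in>p. \<forall>j\<in>p. h i = h j)"

lemma fun_partition_part: "partition_on I (fun_partition I f)"
  unfolding fun_partition_def
  by (rule partition_onI) (auto simp: disjnt_def)

lemma cob_fun_partition: "cob (fun_partition I f) f"
  unfolding cob_def fun_partition_def by auto

lemma cob_meet1: "cob P f \<Longrightarrow> cob (part_meet P Q) f"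
  unfolding cob_def part_meet_def by blast

lemma cob_meet2: "cob Q f \<Longrightarrow> cob (part_meet P Q) f"
  unfolding cob_def part_meet_def by blast

lemma in_power:
  assumes pf: "partition_filter I F" and P: "P \<in> F" and h: "h \<in> I \<rightarrow>\<^sub>E A" and c: "cob P h"
  shows "h \<in> filtered_power A I F"
proof -
  have pP: "partition_on I P" using pf P unfolding partition_filter_def by blast
  have "refines P (fun_partition I h)"
    unfolding refines_def
  proof
    fix p assume p: "p \<in> P"
    then have "p \<noteq> {}" using pP partition_onD3 by blast
    then obtain i0 where i0: "i0 \<in> p" by blast
    have pI: "p \<subseteq> I" using p pP partition_onD1 by blast
    have "p \<subseteq> {i \<in> I. h i = h i0}" using c p i0 pI unfolding cob_def by blast
    moreover have "{i \<in> I. h i = h i0} \<in> fun_partition I h"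
      unfolding fun_partition_def using i0 pI by auto
    ultimately show "\<exists>q\<in>fun_partition I h. p \<subseteq> q" by blast
  qed
  then have "fun_partition I h \<in> F"
    using pf P fun_partition_part unfolding partition_filter_def by blast
  then show ?thesis using h unfolding filtered_power_def by blast
qed

lemma in_B:
  assumes pf: "partition_filter I F" and P: "P \<in> F" and E: "E \<subseteq> I"
    and c: "\<forall>p\<in>P. \<forall>i\<in>p. \<forall>j\<in>p. (i \<in> E \<longleftrightarrow> j \<in> E)"
  shows "E \<in> {{}} \<union> \<Union>F"
proof (cases "E = {}")
  case True then show ?thesis by simp
next
  case False
  have pP: "partition_on I P" using pf P unfolding partition_filter_def by blast
  define Q where "Q = {E, I - E} - {{}}"
  have pQ: "partition_on I Q" unfolding Q_def
    by (rule partition_onI) (use E in \<open>auto simp: disjnt_def\<close>)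
  have "refines P Q"
    unfolding refines_def
  proof
    fix p assume p: "p \<in> P"
    then have "p \<noteq> {}" using pP partition_onD3 by blast
    then obtain i0 where i0: "i0 \<in> p" by blast
    have pI: "p \<subseteq> I" using p pP partition_onD1 by blast
    show "\<exists>q\<in>Q. p \<subseteq> q"
    proof (cases "i0 \<in> E")
      case True
      then have "p \<subseteq> E" using c p i0 by blast
      then show ?thesis using True unfolding Q_def by blast
    next
      case False
      then have "p \<subseteq> I - E" using c p i0 pI by blast
      then show ?thesis using False i0 pI unfolding Q_def by blast
    qed
  qed
  then have "Q \<in> F" using pf P pQ unfolding partition_filter_def by blast
  then show ?thesis using False unfolding Q_def by blast
qed

lemma B_sub: "partition_filter I F \<Longrightarrow> R \<in> {{}} \<union> \<Union>F \<Longrightarrow> R \<subseteq> I"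
  unfolding partition_filter_def partition_on_def by blast

theorem mainTheorem2:
  fixes A :: "'a set" and I :: "'i set" and F :: "'i set set set"
    and \<theta> :: "(('i \<Rightarrow> 'a) \<times> ('i \<Rightarrow> 'a)) set"
    and Z :: "'i set set"
  assumes "infinite A"
    and "partition_filter I F"
    and "omega_congruence A I F \<theta>"
    and "Z = {R \<in> {{}} \<union> \<Union>F. \<forall>f\<in>filtered_power A I F. \<forall>g\<in>filtered_power A I F.
                 (\<forall>i\<in>R. f i = g i) \<longrightarrow> (f, g) \<in> \<theta>}"
  shows "set_filter_on ({{}} \<union> \<Union>F) Z \<and>
         (\<forall>f\<in>filtered_power A I F. \<forall>g\<in>filtered_power A I F.
            (f, g) \<in> \<theta> \<longleftrightarrow> {i \<in> I. f i = g i} \<in> Z)"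
proof -
  note pf = assms(2)
  define U where "U = filtered_power A I F"
  define B where "B = ({{}} \<union> \<Union>F :: 'i set set)"
  have eq: "equiv U \<theta>" using assms(3) unfolding omega_congruence_def U_def by blast
  have refl: "\<And>f. f \<in> U \<Longrightarrow> (f, f) \<in> \<theta>" using eq unfolding equiv_def refl_on_def by blast
  have trans: "\<And>f g h. (f, g) \<in> \<theta> \<Longrightarrow> (g, h) \<in> \<theta> \<Longrightarrow> (f, h) \<in> \<theta>"
    using eq unfolding equiv_def trans_def by blast
  have comp: "\<And>n h fs gs. n \<ge> 1 \<Longrightarrow> (\<forall>xs. length xs = n \<and> set xs \<subseteq> A \<longrightarrow> h xs \<in> A) \<Longrightarrow>
     length fs = n \<Longrightarrow> length gs = n \<Longrightarrow> (\<forall>k<n. (fs ! k, gs ! k) \<in> \<theta>) \<Longrightarrow>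
     (pointwise I h fs, pointwise I h gs) \<in> \<theta>"
  proof -
    fix n h fs gs
    assume a: "n \<ge> 1" "\<forall>xs. length xs = n \<and> set xs \<subseteq> A \<longrightarrow> h xs \<in> A"
      "length fs = n" "length gs = n" "\<forall>k<n. (fs ! k, gs ! k) \<in> \<theta>"
    have C: "\<forall>n::nat. \<forall>h. n \<ge> 1 \<and> (\<forall>xs. length xs = n \<and> set xs \<subseteq> A \<longrightarrow> h xs \<in> A) \<longrightarrow>
        (\<forall>fs gs. length fs = n \<and> length gs = n \<and> (\<forall>k<n. (fs ! k, gs ! k) \<in> \<theta>) \<longrightarrow>
            (pointwise I h fs, pointwise I h gs) \<in> \<theta>)"
      using assms(3) unfolding omega_congruence_def by (rule conjunct2)
    from C[rule_format, of n h fs gs] a show "(pointwise I h fs, pointwise I h gs) \<in> \<theta>" by blast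
  qed
  have Z: "Z = {R \<in> B. \<forall>f\<in>U. \<forall>g\<in>U. (\<forall>i\<in>R. f i = g i) \<longrightarrow> (f, g) \<in> \<theta>}"
    using assms(4) unfolding U_def B_def by simp
  have Uf: "\<And>f. f \<in> U \<Longrightarrow> f \<in> I \<rightarrow>\<^sub>E A \<and> fun_partition I f \<in> F"
    unfolding U_def filtered_power_def by blast
  have meetF: "\<And>P Q. P \<in> F \<Longrightarrow> Q \<in> F \<Longrightarrow> part_meet P Q \<in> F"
    using pf_meet[OF pf] by blast
  have eqB: "{i \<in> I. f i = g i} \<in> B" if f: "f \<in> U" and g: "g \<in> U" for f g
  proof -
    let ?M = "part_meet (fun_partition I f) (fun_partition I g)"
    have M: "?M \<in> F" using meetF Uf f g by blast
    have cf: "cob ?M f" by (rule cob_meet1[OF cob_fun_partition])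
    have cg: "cob ?M g" by (rule cob_meet2[OF cob_fun_partition])
    have MI: "\<forall>p\<in>?M. p \<subseteq> I" using pf_sub[OF pf M] by blast
    have "\<forall>p\<in>?M. \<forall>i\<in>p. \<forall>j\<in>p. (i \<in> {i \<in> I. f i = g i} \<longleftrightarrow> j \<in> {i \<in> I. f i = g i})"
    proof (intro ballI)
      fix p i j assume p: "p \<in> ?M" and i: "i \<in> p" and j: "j \<in> p"
      have "f i = f j" "g i = g j" using cf cg p i j unfolding cob_def by blast+
      moreover have "i \<in> I" "j \<in> I" using MI p i j by blast+
      ultimately show "(i \<in> {i \<in> I. f i = g i} \<longleftrightarrow> j \<in> {i \<in> I. f i = g i})" by simp
    qed
    moreover have "{i \<in> I. f i = g i} \<subseteq> I" by blast
    ultimately show ?thesis unfolding B_def using in_B[OF pf M] by blast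
  qed
  have part2: "(f, g) \<in> \<theta> \<longleftrightarrow> {i \<in> I. f i = g i} \<in> Z" if f: "f \<in> U" and g: "g \<in> U" for f g
  proof
    assume fg: "(f, g) \<in> \<theta>"
    have "(f', g') \<in> \<theta>" if f': "f' \<in> U" and g': "g' \<in> U" and ag: "\<forall>i\<in>{i \<in> I. f i = g i}. f' i = g' i" for f' g'
    proof -
      define h :: "'a list \<Rightarrow> 'a" where "h xs = (if xs ! 0 = xs ! 1 then xs ! 3 else xs ! 2)" for xs
      have hA: "\<forall>xs. length xs = 4 \<and> set xs \<subseteq> A \<longrightarrow> h xs \<in> A"
        unfolding h_def by (auto intro: nth_mem)
      have rel: "\<forall>k<4. ([f, g, f', g'] ! k, [g, g, f', g'] ! k) \<in> \<theta>"
      proof (intro allI impI)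
        fix k :: nat assume "k < 4"
        then have "k = 0 \<or> k = 1 \<or> k = 2 \<or> k = 3" by auto
        then show "([f, g, f', g'] ! k, [g, g, f', g'] ! k) \<in> \<theta>"
          using fg refl g f' g' by auto
      qed
      have c: "(pointwise I h [f, g, f', g'], pointwise I h [g, g, f', g']) \<in> \<theta>"
        by (rule comp[of 4]) (use hA rel in auto)
      have e1: "pointwise I h [f, g, f', g'] = f'"
      proof
        fix i show "pointwise I h [f, g, f', g'] i = f' i"
        proof (cases "i \<in> I")
          case True then show ?thesis using ag unfolding pointwise_def h_def by auto
        next
          case False then show ?thesis using Uf[OF f'] unfolding pointwise_def PiE_def extensional_def by auto
        qed
      qed
      have e2: "pointwise I h [g, g, f', g'] = g'"
      proof
        fix i show "pointwise I h [g, g, f', g'] i = g' i"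
        proof (cases "i \<in> I")
          case True then show ?thesis unfolding pointwise_def h_def by auto
        next
          case False then show ?thesis using Uf[OF g'] unfolding pointwise_def PiE_def extensional_def by auto
        qed
      qed
      show ?thesis using c e1 e2 by simp
    qed
    then show "{i \<in> I. f i = g i} \<in> Z" unfolding Z using eqB[OF f g] by blast
  next
    assume "{i \<in> I. f i = g i} \<in> Z"
    then show "(f, g) \<in> \<theta>" unfolding Z using f g by blast
  qed
  have Bsub: "\<And>R. R \<in> B \<Longrightarrow> R \<subseteq> I" using B_sub[OF pf] unfolding B_def by blast
  have IZ: "I \<in> Z"
  proof -
    have "I \<in> B"
    proof -
      obtain P where P: "P \<in> F" using pf_ne[OF pf] by blast
      have "\<forall>p\<in>P. p \<subseteq> I" using pf_sub[OF pf P] by blast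
      then have "\<forall>p\<in>P. \<forall>i\<in>p. \<forall>j\<in>p. (i \<in> I \<longleftrightarrow> j \<in> I)" by blast
      then show ?thesis unfolding B_def using in_B[OF pf P, of I] by blast
    qed
    moreover have "f = g" if "f \<in> U" "g \<in> U" "\<forall>i\<in>I. f i = g i" for f g
    proof
      fix x show "f x = g x"
        using that(3) Uf[OF that(1)] Uf[OF that(2)] by (cases "x \<in> I") (auto simp: PiE_def extensional_def)
    qed
    ultimately show ?thesis unfolding Z using refl by blast
  qed
  have inter: "R \<inter> S \<in> Z" if R: "R \<in> Z" and S: "S \<in> Z" for R S
  proof -
    have RB: "R \<in> B" and SB: "S \<in> B" using R S unfolding Z by auto
    have RSB: "R \<inter> S \<in> B"
    proof (cases "R \<inter> S = {}")
      case True then show ?thesis unfolding B_def by simp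
    next
      case False
      then obtain P Q where P: "P \<in> F" "R \<in> P" and Q: "Q \<in> F" "S \<in> Q"
        using RB SB unfolding B_def by blast
      have "R \<inter> S \<in> part_meet P Q" unfolding part_meet_def using P Q False by blast
      then show ?thesis using meetF P Q unfolding B_def by blast
    qed
    have "(f, g) \<in> \<theta>" if f: "f \<in> U" and g: "g \<in> U" and ag: "\<forall>i\<in>R \<inter> S. f i = g i" for f g
    proof -
      define h where "h = (\<lambda>i. if i \<in> R then f i else g i)"
      have hU: "h \<in> U"
      proof (cases "R = {}")
        case True then show ?thesis using g unfolding h_def by simp
      next
        case False
        then obtain P where P: "P \<in> F" "R \<in> P" using RB unfolding B_def by blast
        have pP: "partition_on I P" using pf_part[OF pf P(1)] .
        have dP: "\<forall>p\<in>P. p = R \<or> p \<inter> R = {}"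
          using pP P unfolding partition_on_def disjoint_def by blast
        let ?M = "part_meet (part_meet (fun_partition I f) (fun_partition I g)) P"
        have M: "?M \<in> F" using meetF Uf f g P by blast
        have cf: "cob ?M f" by (rule cob_meet1[OF cob_meet1[OF cob_fun_partition]])
        have cg: "cob ?M g" by (rule cob_meet1[OF cob_meet2[OF cob_fun_partition]])
        have cR: "\<forall>m\<in>?M. \<forall>i\<in>m. \<forall>j\<in>m. (i \<in> R \<longleftrightarrow> j \<in> R)"
          unfolding part_meet_def using dP by blast
        have ch: "cob ?M h" unfolding cob_def
        proof (intro ballI)
          fix m i j assume m: "m \<in> ?M" and i: "i \<in> m" and j: "j \<in> m"
          have "f i = f j" "g i = g j" using cf cg m i j unfolding cob_def by blast+
          moreover have "i \<in> R \<longleftrightarrow> j \<in> R" using cR m i j by blast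
          ultimately show "h i = h j" unfolding h_def by simp
        qed
        have "h \<in> I \<rightarrow>\<^sub>E A" using Uf[OF f] Uf[OF g] Bsub[OF RB] unfolding h_def
          by (auto simp: PiE_def extensional_def Pi_def)
        then show ?thesis unfolding U_def by (rule in_power[OF pf M _ ch])
      qed
      have "\<forall>i\<in>R. f i = h i" unfolding h_def by simp
      then have 1: "(f, h) \<in> \<theta>" using R f hU unfolding Z by blast
      have "\<forall>i\<in>S. h i = g i" unfolding h_def using ag by auto
      then have 2: "(h, g) \<in> \<theta>" using S g hU unfolding Z by blast
      show ?thesis using trans 1 2 .
    qed
    then show ?thesis unfolding Z using RSB by blast
  qed
  have up: "S \<in> Z" if "R \<in> Z" "S \<in> B" "R \<subseteq> S" for R S
    using that unfolding Z by blast
  have ZB: "Z \<subseteq> B" unfolding Z by blast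
  have "set_filter_on B Z"
    unfolding set_filter_on_def using IZ inter up ZB by blast
  then show ?thesis using part2 unfolding B_def[symmetric] U_def[symmetric] by blast
qed

end
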